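(* Let $A_3$ be the complex $3$-Lie algebra with basis $\{e_1,e_2,e_3\}$ whose only nonzero bracket of basis elements (up to skew-symmetry) is $[e_1,e_2,e_3]=e_1$, and let $(A_3,\cdot,[\cdot,\cdot,\cdot])$ be a transposed Poisson $3$-Lie algebra. Then there exist $\beta_{21}^2,\beta_{22}^2,\beta_{23}^2,\beta_{31}^2,\beta_{32}^2,\beta_{33}^2,\beta_{31}^3,\beta_{32}^3,\beta_{33}^3\in\mathbb{C}$ such that $e_1\cdot e_1=0$ and $$\begin{aligned} e_1\cdot e_2&=\tfrac{\beta_{22}^2+\beta_{33}^2}{2}e_1, & e_1\cdot e_3&=\tfrac{\beta_{32}^2+\beta_{33}^3}{2}e_1,\\ e_2\cdot e_2&=\beta_{21}^2e_1+\beta_{22}^2e_2+\beta_{23}^2e_3, & e_2\cdot e_3&=\beta_{31}^2e_1+\beta_{32}^2e_2+\beta_{33}^2e_3,\\ e_3\cdot e_3&=\beta_{31}^3e_1+\beta_{32}^3e_2+\beta_{33}^3e_3. \end{aligned}$$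
   Context: A transposed Poisson $3$-Lie algebra is a triple $(A,\cdot,[\cdot,\cdot,\cdot])$ where $(A,\cdot)$ is a commutative algebra (a commutative bilinear product; associativity is not required here), $(A,[\cdot,\cdot,\cdot])$ is a $3$-Lie algebra, and $3u\cdot[x,y,z]=[u\cdot x,y,z]+[x,u\cdot y,z]+[x,y,u\cdot z]$ for all $x,y,z,u\in A$. *)

theory Defs
  imports "HOL-Analysis.Analysis"
begin

text \<open>The underlying complex vector space of A_3 is complex^3, with standard basis e 1, e 2, e 3.
  Scalar multiplication is the componentwise scalar multiplication *s.\<close>

definition bas :: "3 \<Rightarrow> complex^3" where
  "bas i = axis i 1"

definition A3_basis_br :: "3 \<Rightarrow> 3 \<Rightarrow> 3 \<Rightarrow> complex^3" where
  "A3_basis_br i j k =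
     (if (i, j, k) \<in> {(1,2,3), (2,3,1), (3,1,2)} then bas 1
      else if (i, j, k) \<in> {(1,3,2), (2,1,3), (3,2,1)} then - bas 1
      else 0)"

definition A3_br :: "complex^3 \<Rightarrow> complex^3 \<Rightarrow> complex^3 \<Rightarrow> complex^3" where
  "A3_br x y z = (\<Sum>i\<in>UNIV. \<Sum>j\<in>UNIV. \<Sum>k\<in>UNIV. (x$i * y$j * z$k) *s A3_basis_br i j k)"

definition comm_bilinear_prod :: "(complex^'n \<Rightarrow> complex^'n \<Rightarrow> complex^'n) \<Rightarrow> bool" where
  "comm_bilinear_prod m \<longleftrightarrow>
     (\<forall>x y. m x y = m y x) \<and>
     (\<forall>a x y z. m (a *s x + y) z = a *s m x z + m y z)"

definition three_Lie :: "(complex^'n \<Rightarrow> complex^'n \<Rightarrow> complex^'n \<Rightarrow> complex^'n) \<Rightarrow> bool" where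
  "three_Lie br \<longleftrightarrow>
     (\<forall>a x x' y z. br (a *s x + x') y z = a *s br x y z + br x' y z) \<and>
     (\<forall>a x y y' z. br x (a *s y + y') z = a *s br x y z + br x y' z) \<and>
     (\<forall>a x y z z'. br x y (a *s z + z') = a *s br x y z + br x y z') \<and>
     (\<forall>x y z. br y x z = - br x y z) \<and>
     (\<forall>x y z. br x z y = - br x y z) \<and>
     (\<forall>x1 x2 y1 y2 y3.
        br x1 x2 (br y1 y2 y3) =
          br (br x1 x2 y1) y2 y3 + br y1 (br x1 x2 y2) y3 + br y1 y2 (br x1 x2 y3))"

definition transposed_poisson_3Lie ::
  "(complex^'n \<Rightarrow> complex^'n \<Rightarrow> complex^'n) \<Rightarrow>
   (complex^'n \<Rightarrow> complex^'n \<Rightarrow> complex^'n \<Rightarrow> complex^'n) \<Rightarrow> bool" where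
  "transposed_poisson_3Lie m br \<longleftrightarrow>
     comm_bilinear_prod m \<and> three_Lie br \<and>
     (\<forall>u x y z. 3 *s m u (br x y z) = br (m u x) y z + br x (m u y) z + br x y (m u z))"

end

theory Submission
  imports Defs
begin

lemma bas_comp: "bas i $ j = (if j = i then 1 else 0)"
  by (simp add: bas_def axis_def)
lemma bb: "A3_basis_br 1 2 3 = bas 1" "A3_basis_br 2 3 1 = bas 1" "A3_basis_br 3 1 2 = bas 1"
  "A3_basis_br 1 3 2 = - bas 1" "A3_basis_br 2 1 3 = - bas 1" "A3_basis_br 3 2 1 = - bas 1"
  by (simp_all add: A3_basis_br_def)
lemma bz: "A3_basis_br i i k = 0" "A3_basis_br i k i = 0" "A3_basis_br k i i = 0"
  by (auto simp: A3_basis_br_def)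
lemma br_comp:
  "A3_br x y z $ i = (if i = 1 then x$1*y$2*z$3 + x$2*y$3*z$1 + x$3*y$1*z$2
     - x$1*y$3*z$2 - x$2*y$1*z$3 - x$3*y$2*z$1 else 0)"
  unfolding A3_br_def sum_3 bb bz
  by (simp add: bas_comp algebra_simps)
lemma vec3_eq: "(v::complex^3) = w \<longleftrightarrow> v$1 = w$1 \<and> v$2 = w$2 \<and> v$3 = w$3"
  by (simp add: vec_eq_iff forall_3)

theorem lemma3p5:
  fixes m :: "complex^3 \<Rightarrow> complex^3 \<Rightarrow> complex^3"
  assumes "transposed_poisson_3Lie m A3_br"
  shows "\<exists>b2_21 b2_22 b2_23 b2_31 b2_32 b2_33 b3_31 b3_32 b3_33 :: complex.
    m (bas 1) (bas 1) = 0 \<and>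
    m (bas 1) (bas 2) = ((b2_22 + b2_33) / 2) *s bas 1 \<and>
    m (bas 1) (bas 3) = ((b2_32 + b3_33) / 2) *s bas 1 \<and>
    m (bas 2) (bas 2) = b2_21 *s bas 1 + b2_22 *s bas 2 + b2_23 *s bas 3 \<and>
    m (bas 2) (bas 3) = b2_31 *s bas 1 + b2_32 *s bas 2 + b2_33 *s bas 3 \<and>
    m (bas 3) (bas 3) = b3_31 *s bas 1 + b3_32 *s bas 2 + b3_33 *s bas 3"
proof -
  have comm: "\<And>x y. m x y = m y x"
    and id: "\<And>u x y z. 3 *s m u (A3_br x y z) = A3_br (m u x) y z + A3_br x (m u y) z + A3_br x y (m u z)"
    using assms unfolding transposed_poisson_3Lie_def comm_bilinear_prod_def by blast+
  have key: "\<And>u. 3 *s m u (bas 1) = ((m u (bas 1))$1 + (m u (bas 2))$2 + (m u (bas 3))$3) *s bas 1"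
  proof -
    fix u
    have "A3_br (bas 1) (bas 2) (bas 3) = bas 1"
      by (simp add: vec3_eq br_comp bas_comp)
    then have "3 *s m u (bas 1) = A3_br (m u (bas 1)) (bas 2) (bas 3) + A3_br (bas 1) (m u (bas 2)) (bas 3) + A3_br (bas 1) (bas 2) (m u (bas 3))"
      using id[of u "bas 1" "bas 2" "bas 3"] by simp
    also have "\<dots> = ((m u (bas 1))$1 + (m u (bas 2))$2 + (m u (bas 3))$3) *s bas 1"
      by (simp add: vec3_eq br_comp bas_comp)
    finally show "?thesis u" .
  qed
  have k: "\<And>u i. 3 * (m u (bas 1))$i = (if i = 1 then (m u (bas 1))$1 + (m u (bas 2))$2 + (m u (bas 3))$3 else 0)"
    using key by (simp add: vec_eq_iff bas_comp)
  let ?a = "m (bas 2) (bas 2)" and ?b = "m (bas 2) (bas 3)" and ?c = "m (bas 3) (bas 3)"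
  have k1: "\<And>i. 3 * (m (bas 1) (bas 1))$i = (if i = 1 then (m (bas 1) (bas 1))$1 + (m (bas 1) (bas 2))$2 + (m (bas 1) (bas 3))$3 else 0)"
    using k by blast
  have k2: "\<And>i. 3 * (m (bas 1) (bas 2))$i = (if i = 1 then (m (bas 1) (bas 2))$1 + ?a$2 + ?b$3 else 0)"
    using k[of "bas 2"] comm by metis
  have k3: "\<And>i. 3 * (m (bas 1) (bas 3))$i = (if i = 1 then (m (bas 1) (bas 3))$1 + ?b$2 + ?c$3 else 0)"
    using k[of "bas 3"] comm by metis
  have z12: "(m (bas 1) (bas 2))$2 = 0" "(m (bas 1) (bas 2))$3 = 0" using k2[of 2] k2[of 3] by auto
  have z13: "(m (bas 1) (bas 3))$2 = 0" "(m (bas 1) (bas 3))$3 = 0" using k3[of 2] k3[of 3] by auto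
  have z11: "(m (bas 1) (bas 1))$2 = 0" "(m (bas 1) (bas 1))$3 = 0" using k1[of 2] k1[of 3] by auto
  have e11: "(m (bas 1) (bas 1))$1 = 0" using k1[of 1] z12 z13 by simp
  have e12: "(m (bas 1) (bas 2))$1 = (?a$2 + ?b$3) / 2" using k2[of 1] by (simp add: field_simps)
  have e13: "(m (bas 1) (bas 3))$1 = (?b$2 + ?c$3) / 2" using k3[of 1] by (simp add: field_simps)
  show ?thesis
    apply (rule exI[of _ "?a$1"], rule exI[of _ "?a$2"], rule exI[of _ "?a$3"])
    apply (rule exI[of _ "?b$1"], rule exI[of _ "?b$2"], rule exI[of _ "?b$3"])
    apply (rule exI[of _ "?c$1"], rule exI[of _ "?c$2"], rule exI[of _ "?c$3"])
    using z11 z12 z13 e11 e12 e13 by (simp add: vec3_eq bas_comp)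
qed

end
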